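(* Let $d$ be a positive integer. For all integers $t\ge1$ and $k\in[0,d-1]$ there exist constants $C=C(t,k,d)$ and $T=T(t,k,d)$ such that every set $A\subseteq\mathbb{R}^d$ satisfying $P(A;T,k,d)$ has a subset $A_{(C)}\subseteq A$ with $|A_{(C)}|\le C$ satisfying $P(A_{(C)};t,k,d)$.
   Context: For $A\subseteq\mathbb{R}^d$, positive integer $t$ and integer $0\le k<d$, $P(A;t,k,d)$ denotes the property that $A$ is not contained in the union of any $t$ translates of a single $k$-dimensional linear subspace of $\mathbb{R}^d$. *)

theory Defs
  imports "HOL-Analysis.Analysis"
begin

text \<open>The ambient space R^d is the type real^'n, d = CARD('n).\<close>
definition P_prop :: "(real ^ 'n) set \<Rightarrow> nat \<Rightarrow> nat \<Rightarrow> bool" where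
  "P_prop A t k \<longleftrightarrow>
     \<not> (\<exists>V c. subspace V \<and> dim V = k \<and> A \<subseteq> (\<Union>i<t. (\<lambda>v. c i + v) ` V))"

end

theory Submission
  imports Defs
begin

definition cov :: "(real^'n) set \<Rightarrow> nat \<Rightarrow> nat \<Rightarrow> (real^'n) set \<Rightarrow> bool" where
  "cov U t k A \<longleftrightarrow> (\<exists>V c. subspace V \<and> U \<subseteq> V \<and> dim V = k \<and> A \<subseteq> (\<Union>i<t. (\<lambda>v. c i + v) ` V))"

lemma superspace:
  fixes U :: "(real^'n) set"
  assumes "subspace U" "dim U \<le> k" "k \<le> CARD('n)"
  shows "\<exists>V. subspace V \<and> U \<subseteq> V \<and> dim V = k"
proof -
  obtain B where B: "B \<subseteq> U" "independent B" "U \<subseteq> span B" "card B = dim U"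
    by (rule basis_exists)
  obtain B' where B': "B \<subseteq> B'" "independent B'" "UNIV \<subseteq> span B'"
    using maximal_independent_subset_extend[of B UNIV] B(2) by auto
  have "span B' = UNIV" using B'(3) by auto
  then have "dim B' = dim (UNIV::(real^'n) set)" by (metis dim_span)
  also have "\<dots> = CARD('n)" by simp
  finally have "card B' = CARD('n)" using B'(2) by (simp add: dim_eq_card_independent)
  moreover have fin: "finite B'" using B'(2) finiteI_independent by blast
  ultimately have "k - card B \<le> card (B' - B)"
    using B'(1) B(4) assms by (simp add: card_Diff_subset finite_subset)
  then obtain X where X: "X \<subseteq> B' - B" "card X = k - card B" "finite X"
    by (rule obtain_subset_with_card_n)
  have ind: "independent (B \<union> X)" using independent_mono[OF B'(2)] X(1) B'(1) by blast
  have "card (B \<union> X) = k"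
    using X B(4) assms fin B'(1) by (subst card_Un_disjoint) (auto intro: finite_subset)
  then show ?thesis using ind B(3)
    by (intro exI[of _ "span (B \<union> X)"]) (auto simp: dim_span_eq_card_independent dim_eq_card_independent intro: span_mono[THEN subsetD])
qed

lemma pigeon:
  fixes S V :: "(real^'n) set"
  assumes "finite S" "card S = Suc t" "S \<subseteq> (\<Union>i<t. (\<lambda>v. c i + v) ` V)" "subspace V"
  shows "\<exists>x\<in>S. \<exists>y\<in>S. x \<noteq> y \<and> x - y \<in> V"
proof -
  define f where "f s = (SOME i. i < t \<and> s \<in> (\<lambda>v. c i + v) ` V)" for s
  have f: "f s < t \<and> s \<in> (\<lambda>v. c (f s) + v) ` V" if "s \<in> S" for s
  proof -
    have "\<exists>i. i < t \<and> s \<in> (\<lambda>v. c i + v) ` V" using assms(3) that by blast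
    then show ?thesis unfolding f_def by (rule someI_ex)
  qed
  have "\<not> inj_on f S"
  proof
    assume "inj_on f S"
    then have "card S \<le> card {..<t}" by (rule card_inj_on_le) (use f in auto)
    then show False using assms(2) by simp
  qed
  then obtain x y where xy: "x \<in> S" "y \<in> S" "x \<noteq> y" "f x = f y"
    unfolding inj_on_def by blast
  obtain v where v: "v \<in> V" "x = c (f x) + v" using f[OF xy(1)] by blast
  obtain w where w: "w \<in> V" "y = c (f y) + w" using f[OF xy(2)] by blast
  have "x - y = (c (f x) + v) - (c (f y) + w)" using v(2) w(2) by simp
  also have "\<dots> = v - w" using xy(4) by simp
  finally have eq: "x - y = v - w" .
  have "x - y \<in> V" unfolding eq using v(1) w(1) assms(4) by (simp add: subspace_diff)
  with xy show ?thesis by blast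
qed

lemma getS:
  fixes U A :: "(real^'n) set"
  assumes "subspace U" "dim U \<le> k" "k \<le> CARD('n)" "\<not> cov U t k A"
  shows "\<exists>S\<subseteq>A. finite S \<and> card S = Suc t \<and> (\<forall>x\<in>S. \<forall>y\<in>S. x \<noteq> y \<longrightarrow> x - y \<notin> U)"
proof -
  obtain V0 where V0: "subspace V0" "U \<subseteq> V0" "dim V0 = k" using superspace assms by blast
  have nc: "\<not> A \<subseteq> (\<Union>i<t. (\<lambda>v. c i + v) ` U)" for c
  proof
    assume "A \<subseteq> (\<Union>i<t. (\<lambda>v. c i + v) ` U)"
    then have "A \<subseteq> (\<Union>i<t. (\<lambda>v. c i + v) ` V0)" using V0(2) by blast
    then show False using assms(4) V0 unfolding cov_def by blast
  qed
  have "m \<le> Suc t \<Longrightarrow> \<exists>S\<subseteq>A. finite S \<and> card S = m \<and> (\<forall>x\<in>S. \<forall>y\<in>S. x \<noteq> y \<longrightarrow> x - y \<notin> U)" for m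
  proof (induction m)
    case 0
    then show ?case by (intro exI[of _ "{}"]) auto
  next
    case (Suc m)
    then obtain S where S: "S \<subseteq> A" "finite S" "card S = m" "\<forall>x\<in>S. \<forall>y\<in>S. x \<noteq> y \<longrightarrow> x - y \<notin> U"
      by auto
    obtain xs where xs: "set xs = S" "distinct xs" using S(2) finite_distinct_list by blast
    have len: "length xs = m" using xs S(3) distinct_card by fastforce
    obtain a where a: "a \<in> A" "a \<notin> (\<Union>i<t. (\<lambda>v. xs ! i + v) ` U)"
      using nc[of "\<lambda>i. xs ! i"] by blast
    have cl: "a - s \<notin> U" if "s \<in> S" for s
    proof
      assume "a - s \<in> U"
      have "s \<in> set xs" using that xs(1) by simp
      then obtain i where i: "i < length xs" "xs ! i = s" by (auto simp: in_set_conv_nth)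
      have "a = xs ! i + (a - s)" using i(2) by simp
      then have "a \<in> (\<lambda>v. xs ! i + v) ` U" using \<open>a - s \<in> U\<close> by (rule image_eqI)
      moreover have "i < t" using i(1) len Suc.prems by simp
      ultimately have "a \<in> (\<Union>i<t. (\<lambda>v. xs ! i + v) ` U)" by blast
      then show False using a(2) by blast
    qed
    have cl2: "s - a \<notin> U" if "s \<in> S" for s
    proof
      assume "s - a \<in> U"
      then have "-(s - a) \<in> U" using assms(1) by (rule subspace_neg[rotated])
      then show False using cl[OF that] by simp
    qed
    have aS: "a \<notin> S" using cl[of a] subspace_0[OF assms(1)] by auto
    have "card (insert a S) = Suc m" using S(2,3) aS by simp
    moreover have "\<forall>x\<in>insert a S. \<forall>y\<in>insert a S. x \<noteq> y \<longrightarrow> x - y \<notin> U"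
      using S(4) cl cl2 by blast
    ultimately show ?case
      using S(1,2) a(1) by (intro exI[of _ "insert a S"]) simp
  qed
  then show ?thesis by blast
qed


fun Cf :: "nat \<Rightarrow> nat \<Rightarrow> nat" where
  "Cf t 0 = Suc t"
| "Cf t (Suc j) = Suc t + Suc t * Suc t * Cf t j"

lemma Cf_ge: "Suc t \<le> Cf t j"
  by (cases j) auto

lemma main:
  fixes t k :: nat
  assumes "k \<le> CARD('n)"
  shows "\<forall>U::(real^'n) set. subspace U \<and> dim U \<le> k \<and> k \<le> dim U + j \<longrightarrow>
     (\<forall>A. \<not> cov U t k A \<longrightarrow> (\<exists>B\<subseteq>A. finite B \<and> card B \<le> Cf t j \<and> \<not> cov U t k B))"
proof (induction j)
  case 0
  show ?case
  proof (intro allI impI)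
    fix U :: "(real^'n) set" and A
    assume U: "subspace U \<and> dim U \<le> k \<and> k \<le> dim U + 0" and nA: "\<not> cov U t k A"
    obtain S where S: "S \<subseteq> A" "finite S" "card S = Suc t" "\<forall>x\<in>S. \<forall>y\<in>S. x \<noteq> y \<longrightarrow> x - y \<notin> U"
      using getS[where U=U and k=k and t=t and A=A] U nA assms by blast
    have "\<not> cov U t k S"
    proof
      assume "cov U t k S"
      then obtain V c where V: "subspace V" "U \<subseteq> V" "dim V = k" "S \<subseteq> (\<Union>i<t. (\<lambda>v. c i + v) ` V)"
        unfolding cov_def by blast
      have "U = V" using subspace_dim_equal[of U V] U V by simp
      then show False using pigeon[OF S(2,3) V(4) V(1)] S(4) by blast
    qed
    then show "\<exists>B\<subseteq>A. finite B \<and> card B \<le> Cf t 0 \<and> \<not> cov U t k B"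
      using S by auto
  qed
next
  case (Suc j)
  show ?case
  proof (intro allI impI)
    fix U :: "(real^'n) set" and A
    assume U: "subspace U \<and> dim U \<le> k \<and> k \<le> dim U + Suc j" and nA: "\<not> cov U t k A"
    obtain S where S: "S \<subseteq> A" "finite S" "card S = Suc t" "\<forall>x\<in>S. \<forall>y\<in>S. x \<noteq> y \<longrightarrow> x - y \<notin> U"
      using getS[where U=U and k=k and t=t and A=A] U nA assms by blast
    show "\<exists>B\<subseteq>A. finite B \<and> card B \<le> Cf t (Suc j) \<and> \<not> cov U t k B"
    proof (cases "dim U = k")
      case True
      have "\<not> cov U t k S"
      proof
        assume "cov U t k S"
        then obtain V c where V: "subspace V" "U \<subseteq> V" "dim V = k" "S \<subseteq> (\<Union>i<t. (\<lambda>v. c i + v) ` V)"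
          unfolding cov_def by blast
        have "U = V" using subspace_dim_equal[of U V] U V True by simp
        then show False using pigeon[OF S(2,3) V(4) V(1)] S(4) by blast
      qed
      then show ?thesis using S Cf_ge[of t "Suc j"] by auto
    next
      case False
      define P where "P = {p \<in> S \<times> S. fst p \<noteq> snd p}"
      have Bex: "\<exists>B\<subseteq>A. finite B \<and> card B \<le> Cf t j \<and> \<not> cov (span (insert (fst p - snd p) U)) t k B"
        if p: "p \<in> P" for p
      proof -
        let ?U' = "span (insert (fst p - snd p) U)"
        have "span U = U" using U by simp
        have notin: "fst p - snd p \<notin> span U"
          unfolding \<open>span U = U\<close> using p S(4) unfolding P_def by auto
        have dU': "dim ?U' = dim U + 1"
          using notin by (simp add: dim_insert)
        have "\<not> cov ?U' t k A"
        proof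
          assume "cov ?U' t k A"
          then obtain V c where V: "subspace V" "?U' \<subseteq> V" "dim V = k" "A \<subseteq> (\<Union>i<t. (\<lambda>v. c i + v) ` V)"
            unfolding cov_def by blast
          have "U \<subseteq> ?U'" by (meson span_superset subset_insertI subset_trans)
          then have "U \<subseteq> V" using V(2) by (rule subset_trans)
          then have "cov U t k A" unfolding cov_def using V by blast
          then show False using nA by simp
        qed
        have sU': "subspace ?U'" by (rule subspace_span)
        have "dim ?U' \<le> k" using dU' U False by linarith
        moreover have "k \<le> dim ?U' + j" using dU' U by linarith
        ultimately have "\<forall>A. \<not> cov ?U' t k A \<longrightarrow> (\<exists>B\<subseteq>A. finite B \<and> card B \<le> Cf t j \<and> \<not> cov ?U' t k B)"
          using Suc.IH sU' by blast
        then show ?thesis using \<open>\<not> cov ?U' t k A\<close> by blast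
      qed
      then have "\<forall>p\<in>P. \<exists>B. B \<subseteq> A \<and> finite B \<and> card B \<le> Cf t j
          \<and> \<not> cov (span (insert (fst p - snd p) U)) t k B" by blast
      then obtain Bf where Bf0: "\<forall>p\<in>P. Bf p \<subseteq> A \<and> finite (Bf p) \<and> card (Bf p) \<le> Cf t j
          \<and> \<not> cov (span (insert (fst p - snd p) U)) t k (Bf p)"
        by (rule bchoice[elim_format]) blast
      then have Bf: "\<And>p. p \<in> P \<Longrightarrow> Bf p \<subseteq> A \<and> finite (Bf p) \<and> card (Bf p) \<le> Cf t j
          \<and> \<not> cov (span (insert (fst p - snd p) U)) t k (Bf p)" by blast
      define B where "B = S \<union> (\<Union>p\<in>P. Bf p)"
      have finP: "finite P" unfolding P_def using S(2) by simp
      have cardP: "card P \<le> Suc t * Suc t"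
      proof -
        have "card P \<le> card (S \<times> S)" unfolding P_def using S(2)
          by (intro card_mono) auto
        then show ?thesis using S(3) by (simp add: card_cartesian_product)
      qed
      have "card (\<Union>p\<in>P. Bf p) \<le> (\<Sum>p\<in>P. card (Bf p))" by (rule card_UN_le[OF finP])
      also have "\<dots> \<le> (\<Sum>p\<in>P. Cf t j)" using Bf by (intro sum_mono) auto
      also have "\<dots> = card P * Cf t j" by simp
      also have "\<dots> \<le> Suc t * Suc t * Cf t j" using cardP by (rule mult_right_mono) simp
      finally have cU: "card (\<Union>p\<in>P. Bf p) \<le> Suc t * Suc t * Cf t j" .
      have "card B \<le> card S + card (\<Union>p\<in>P. Bf p)" unfolding B_def by (rule card_Un_le)
      then have cB: "card B \<le> Cf t (Suc j)" using cU S(3) by simp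
      have finB: "finite B" unfolding B_def using S(2) finP Bf by auto
      have BA: "B \<subseteq> A" unfolding B_def using S(1) Bf by auto
      have "\<not> cov U t k B"
      proof
        assume "cov U t k B"
        then obtain V c where V: "subspace V" "U \<subseteq> V" "dim V = k" "B \<subseteq> (\<Union>i<t. (\<lambda>v. c i + v) ` V)"
          unfolding cov_def by blast
        have "S \<subseteq> B" unfolding B_def by (rule Un_upper1)
        then have "S \<subseteq> (\<Union>i<t. (\<lambda>v. c i + v) ` V)" using V(4) by (rule subset_trans)
        then obtain x y where xy: "x \<in> S" "y \<in> S" "x \<noteq> y" "x - y \<in> V"
          using pigeon[OF S(2,3) _ V(1)] by blast
        have pP: "(x, y) \<in> P" unfolding P_def using xy by simp
        have "span (insert (x - y) U) \<subseteq> V"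
          using V(1,2) xy(4) by (intro span_minimal) auto
        moreover have "Bf (x, y) \<subseteq> B" unfolding B_def using pP by blast
        then have "Bf (x, y) \<subseteq> (\<Union>i<t. (\<lambda>v. c i + v) ` V)" using V(4) by (rule subset_trans)
        ultimately have "cov (span (insert (x - y) U)) t k (Bf (x, y))"
          unfolding cov_def using V(1,3) by (intro exI[of _ V] exI[of _ c]) simp
        then show False using Bf[OF pP] by simp
      qed
      then show ?thesis using BA finB cB by blast
    qed
  qed
qed

theorem lemma4p2:
  fixes t k :: nat
  assumes "t \<ge> 1" and "k < CARD('n::finite)"
  shows "\<exists>C T::nat. T \<ge> 1 \<and>
           (\<forall>A :: (real ^ 'n) set. P_prop A T k \<longrightarrow>
              (\<exists>B. B \<subseteq> A \<and> finite B \<and> card B \<le> C \<and> P_prop B t k))"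
proof -
  have "P_prop A t k \<longrightarrow> (\<exists>B. B \<subseteq> A \<and> finite B \<and> card B \<le> Cf t k \<and> P_prop B t k)"
    for A :: "(real^'n) set"
  proof
  assume PA: "P_prop A t k"
  have eq: "P_prop X t k \<longleftrightarrow> \<not> cov {0} t k X" for X :: "(real^'n) set"
    unfolding P_prop_def cov_def by (auto simp: subspace_0)
  have d0: "dim {0::real^'n} = 0" by (simp add: dim_insert)
  have "subspace {0::real^'n}" by (rule subspace_single_0)
  then obtain B where "B \<subseteq> A" "finite B" "card B \<le> Cf t k" "\<not> cov {0} t k B"
    using main[where k=k and t=t and j=k, rule_format, of "{0}" A] assms PA eq d0 by auto
  then show "\<exists>B. B \<subseteq> A \<and> finite B \<and> card B \<le> Cf t k \<and> P_prop B t k"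
    using eq by blast
  qed
  then show ?thesis using assms(1) by blast
qed

end
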